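(* Let $\mu$ be a probability distribution on $\mathcal X$, $\sigma\in(0,1]$, $\beta>0$, and let $K$ be a positive integer with $K\ge\log(T/\beta)/\sigma$. Let $A\subset\mathcal X^T$ be a measurable event such that $\Pr[\tilde X^T\in A]\ge1-\beta$ for every adversary $K$-selection process $\tilde X^T$ w.r.t. $\mu$. Then $\Pr[X^T\in A]\ge1-2\beta$ for every process $X^T$ that is $\sigma$-smooth w.r.t. $\mu$.
   Context: A distribution $\nu$ on $\mathcal X$ is $\sigma$-smooth w.r.t. $\mu$ ($\sigma\in(0,1]$) if $\nu$ is absolutely continuous w.r.t. $\mu$ and $\frac{d\nu}{d\mu}\le1/\sigma$ $\mu$-a.s. A process $X^T$ on $\mathcal X^T$ is $\sigma$-smooth w.r.t. $\mu$ if for all $t\le T$ the conditional distribution of $X_t$ given $X_1,\dots,X_{t-1}$ is $\sigma$-smooth w.r.t. $\mu$ almost surely. A random variable $X$ is $K$-selection w.r.t. $\mu$ if $X=f(V^K)\in\{V_1,\dots,V_K\}$ for some deterministic function $f$, where $V^K=(V_1,\dots,V_K)\sim\mu^{\otimes K}$. A process $\tilde X^T$ is an adversary $K$-selection process w.r.t. $\mu$ if for all $t\le T$ the conditional distribution of $\tilde X_t$ given $\tilde X_1,\dots,\tilde X_{t-1}$ is almost surely the law of some $K$-selection random variable w.r.t. $\mu$. *)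

theory Defs
  imports "HOL-Probability.Probability"
begin

definition sigma_smooth :: "'a measure \<Rightarrow> real \<Rightarrow> 'a measure \<Rightarrow> bool" where
  "sigma_smooth \<mu> \<sigma> \<nu> \<longleftrightarrow>
     sets \<nu> = sets \<mu> \<and> absolutely_continuous \<mu> \<nu> \<and>
     (AE x in \<mu>. RN_deriv \<mu> \<nu> x \<le> ennreal (1 / \<sigma>))"

definition K_selection_law :: "'a measure \<Rightarrow> nat \<Rightarrow> 'a measure \<Rightarrow> bool" where
  "K_selection_law \<mu> K \<nu> \<longleftrightarrow>
     (\<exists>f. f \<in> measurable (PiM {0..<K} (\<lambda>_. \<mu>)) \<mu> \<and>
          (\<forall>v\<in>space (PiM {0..<K} (\<lambda>_. \<mu>)). f v \<in> v ` {0..<K}) \<and>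
          \<nu> = distr (PiM {0..<K} (\<lambda>_. \<mu>)) \<mu> f)"

text \<open>Histories of length t: functions on {0..<t} (coordinates X_1..X_t are indexed 0..t-1).\<close>
abbreviation hist :: "'a measure \<Rightarrow> nat \<Rightarrow> (nat \<Rightarrow> 'a) measure" where
  "hist \<mu> t \<equiv> PiM {0..<t} (\<lambda>_. \<mu>)"

text \<open>A process is given by its conditional distributions: kappa t h is the conditional
  law of the (t+1)-st coordinate given the history h of the first t coordinates.
  proc_law mu kappa t is the joint law of the first t coordinates.\<close>
fun proc_law :: "'a measure \<Rightarrow> (nat \<Rightarrow> (nat \<Rightarrow> 'a) \<Rightarrow> 'a measure) \<Rightarrow> nat \<Rightarrow> (nat \<Rightarrow> 'a) measure" where
  "proc_law \<mu> \<kappa> 0 = hist \<mu> 0"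
| "proc_law \<mu> \<kappa> (Suc t) =
     bind (proc_law \<mu> \<kappa> t) (\<lambda>h. distr (\<kappa> t h) (hist \<mu> (Suc t)) (\<lambda>x. h(t := x)))"

definition kernel_process :: "'a measure \<Rightarrow> nat \<Rightarrow> (nat \<Rightarrow> (nat \<Rightarrow> 'a) \<Rightarrow> 'a measure) \<Rightarrow> bool" where
  "kernel_process \<mu> T \<kappa> \<longleftrightarrow> (\<forall>t<T. \<kappa> t \<in> measurable (hist \<mu> t) (prob_algebra \<mu>))"

definition smooth_process :: "'a measure \<Rightarrow> real \<Rightarrow> nat \<Rightarrow> (nat \<Rightarrow> (nat \<Rightarrow> 'a) \<Rightarrow> 'a measure) \<Rightarrow> bool" where
  "smooth_process \<mu> \<sigma> T \<kappa> \<longleftrightarrow> kernel_process \<mu> T \<kappa> \<and>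
     (\<forall>t<T. \<forall>h\<in>space (hist \<mu> t). sigma_smooth \<mu> \<sigma> (\<kappa> t h))"

definition adversary_selection_process :: "'a measure \<Rightarrow> nat \<Rightarrow> nat \<Rightarrow> (nat \<Rightarrow> (nat \<Rightarrow> 'a) \<Rightarrow> 'a measure) \<Rightarrow> bool" where
  "adversary_selection_process \<mu> K T \<kappa> \<longleftrightarrow> kernel_process \<mu> T \<kappa> \<and>
     (\<forall>t<T. \<forall>h\<in>space (hist \<mu> t). K_selection_law \<mu> K (\<kappa> t h))"

end

theory Submission
  imports Defs
begin


fun mx :: "('a \<Rightarrow> ennreal) \<Rightarrow> nat \<Rightarrow> (nat \<Rightarrow> 'a) \<Rightarrow> ennreal" where
  "mx g 0 v = 0"
| "mx g (Suc k) v = max (g (v k)) (mx g k v)"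

fun ix :: "('a \<Rightarrow> ennreal) \<Rightarrow> nat \<Rightarrow> (nat \<Rightarrow> 'a) \<Rightarrow> nat" where
  "ix g 0 v = 0"
| "ix g (Suc k) v = (if mx g k v \<le> g (v k) then k else ix g k v)"

lemma ix_less: "0 < k \<Longrightarrow> ix g k v < k"
  by (induction k) (auto simp: less_Suc_eq)

lemma ix_mx: "0 < k \<Longrightarrow> g (v (ix g k v)) = mx g k v"
proof (induction k)
  case (Suc k) then show ?case by (cases "k = 0") (auto simp: max_def)
qed simp

lemma mx_upd: "k \<le> j \<Longrightarrow> mx g k (w(j := y)) = mx g k w"
  by (induction k) auto

lemma mx_le1: "(\<And>x. g x \<le> 1) \<Longrightarrow> mx g k v \<le> 1"
  by (induction k) auto

lemma mx_meas:
  assumes G[measurable]: "case_prod G \<in> borel_measurable (N \<Otimes>\<^sub>M M)"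
  shows "k \<le> K \<Longrightarrow> (\<lambda>(h,v). mx (G h) k v) \<in> borel_measurable (N \<Otimes>\<^sub>M PiM {0..<K} (\<lambda>_. M))"
proof (induction k)
  case 0 then show ?case by simp
next
  case (Suc k)
  have "(\<lambda>p. (fst p, snd p k)) \<in> measurable (N \<Otimes>\<^sub>M PiM {0..<K} (\<lambda>_. M)) (N \<Otimes>\<^sub>M M)"
    using Suc.prems by (measurable) (use Suc.prems in auto)
  then have "(\<lambda>p. G (fst p) (snd p k)) \<in> borel_measurable (N \<Otimes>\<^sub>M PiM {0..<K} (\<lambda>_. M))"
    using measurable_comp[OF _ G] by (simp add: comp_def split_beta)
  then show ?case using Suc by (simp add: split_beta)
qed

lemma ix_meas:
  assumes G[measurable]: "case_prod G \<in> borel_measurable (N \<Otimes>\<^sub>M M)"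
  shows "k \<le> K \<Longrightarrow> (\<lambda>(h,v). ix (G h) k v) \<in> measurable (N \<Otimes>\<^sub>M PiM {0..<K} (\<lambda>_. M)) (count_space UNIV)"
proof (induction k)
  case 0 then show ?case by simp
next
  case (Suc k)
  have "(\<lambda>p. (fst p, snd p k)) \<in> measurable (N \<Otimes>\<^sub>M PiM {0..<K} (\<lambda>_. M)) (N \<Otimes>\<^sub>M M)"
    using Suc.prems by (measurable) (use Suc.prems in auto)
  then have [measurable]: "(\<lambda>p. G (fst p) (snd p k)) \<in> borel_measurable (N \<Otimes>\<^sub>M PiM {0..<K} (\<lambda>_. M))"
    using measurable_comp[OF _ G] by (simp add: comp_def split_beta)
  have [measurable]: "(\<lambda>p. mx (G (fst p)) k (snd p)) \<in> borel_measurable (N \<Otimes>\<^sub>M PiM {0..<K} (\<lambda>_. M))"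
    using mx_meas[OF G, of k K] Suc by (simp add: split_beta)
  have [measurable]: "(\<lambda>p. ix (G (fst p)) k (snd p)) \<in> measurable (N \<Otimes>\<^sub>M PiM {0..<K} (\<lambda>_. M)) (count_space UNIV)"
    using Suc by (simp add: split_beta)
  show ?case by (simp add: split_beta) measurable
qed

lemma sel_meas:
  assumes G[measurable]: "case_prod G \<in> borel_measurable (N \<Otimes>\<^sub>M M)" and K: "0 < K"
  shows "(\<lambda>(h,v). v (ix (G h) K v)) \<in> measurable (N \<Otimes>\<^sub>M PiM {0..<K} (\<lambda>_. M)) M"
proof -
  have eq: "(\<lambda>(h,v). v (ix (G h) K v)) = (\<lambda>p. (\<lambda>i p. snd p (min i (K - 1))) ((\<lambda>(h,v). ix (G h) K v) p) p)"
  proof -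
    have "\<And>h v. min (ix (G h) K v) (K - 1) = ix (G h) K v"
      using ix_less[OF K] K by (metis Suc_pred' less_Suc_eq_le min.absorb1)
    then show ?thesis by (auto simp: fun_eq_iff)
  qed
  have g: "(\<lambda>(h,v). ix (G h) K v) \<in> measurable (N \<Otimes>\<^sub>M PiM {0..<K} (\<lambda>_. M)) (count_space UNIV)"
    by (rule ix_meas[OF G]) simp
  have f: "(\<lambda>p. snd p (min i (K - 1))) \<in> measurable (N \<Otimes>\<^sub>M PiM {0..<K} (\<lambda>_. M)) M" for i
  proof -
    have "min i (K - 1) \<in> {0..<K}" using K by auto
    then show ?thesis by measurable
  qed
  show ?thesis unfolding eq
    by (rule measurable_compose_countable[where f="\<lambda>i p. snd p (min i (K - 1))", OF f g])
qed

lemma upd_meas: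
  fixes M :: "'a measure"
  shows "(\<lambda>(h,x). h(t := x)) \<in> measurable (hist M t \<Otimes>\<^sub>M M) (hist M (Suc t))"
proof -
  have *: "(\<lambda>\<omega> i. (\<lambda>i \<omega>. ((fst \<omega>)(t := snd \<omega>)) i) i \<omega>) \<in> measurable (hist M t \<Otimes>\<^sub>M M) (hist M (Suc t))"
  proof (rule measurable_PiM_single'[where f="\<lambda>i \<omega>. ((fst \<omega>)(t := snd \<omega>)) i"])
    fix i assume "i \<in> {0..<Suc t}"
    then show "(\<lambda>\<omega>. ((fst \<omega>)(t := snd \<omega>)) i) \<in> measurable (hist M t \<Otimes>\<^sub>M M) M"
      by (cases "i = t") auto
  next
    show "(\<lambda>\<omega> i. ((fst \<omega>)(t := snd \<omega>)) i) \<in> space (hist M t \<Otimes>\<^sub>M M) \<rightarrow> (\<Pi>\<^sub>E i\<in>{0..<Suc t}. space M)"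
      by (auto simp: space_pair_measure space_PiM PiE_def extensional_def Pi_iff)
  qed
  have "(\<lambda>(h,x::'a). h(t := x)) = (\<lambda>\<omega> i. (\<lambda>i \<omega>. ((fst \<omega>)(t := snd \<omega>)) i) i \<omega>)"
    by (auto simp: fun_eq_iff)
  with * show ?thesis by argo
qed



lemma pw_ineq:
  fixes a b s :: ennreal
  assumes "s \<le> 1" "a < \<top>" "b < \<top>"
  shows "s * a + b \<le> max a b + s * b"
proof -
  obtain a' where a: "a = ennreal a'" "0 \<le> a'" using assms(2) by (cases a) auto
  obtain b' where b: "b = ennreal b'" "0 \<le> b'" using assms(3) by (cases b) auto
  obtain s' where s: "s = ennreal s'" "0 \<le> s'" "s' \<le> 1" using assms(1)
    by (cases s) (auto simp: ennreal_le_1 top_unique)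
  have "s' * a' + b' \<le> max a' b' + s' * b'"
  proof (cases "a' \<le> b'")
    case True then show ?thesis using s by (simp add: max_def mult_left_mono)
  next
    case False
    then have "s' * (a' - b') \<le> a' - b'" using s by (simp add: mult_left_le_one_le)
    then show ?thesis using False by (simp add: max_def algebra_simps)
  qed
  then show ?thesis using a b s
    by (simp add: ennreal_mult[symmetric] ennreal_plus[symmetric] max_def ennreal_le_iff del: ennreal_plus)
       (auto intro: mult_left_mono split: if_splits)
qed

lemma mx_meas1:
  assumes [measurable]: "g \<in> borel_measurable M"
  shows "k \<le> K \<Longrightarrow> mx g k \<in> borel_measurable (PiM {0..<K} (\<lambda>_. M))"
proof (induction k)
  case (Suc k)
  then have "k \<in> {0..<K}" by auto
  with Suc show ?case by (simp add: max_def) measurable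
next
  case 0
  have "mx g 0 = (\<lambda>_. 0)" by (rule ext) simp
  then show ?case by simp
qed

lemma key_step:
  assumes P: "prob_space M" and s: "0 < \<sigma>" "\<sigma> \<le> 1" and sm: "sigma_smooth M \<sigma> \<nu>"
    and Pn: "prob_space \<nu>"
    and g[measurable]: "g \<in> borel_measurable M" and g1: "\<And>x. g x \<le> 1"
  shows "ennreal \<sigma> * (\<integral>\<^sup>+x. g x \<partial>\<nu>) + (\<integral>\<^sup>+v. mx g K v \<partial>hist M K)
    \<le> (\<integral>\<^sup>+v. mx g (Suc K) v \<partial>hist M (Suc K)) + ennreal \<sigma> * (\<integral>\<^sup>+v. mx g K v \<partial>hist M K)"
proof -
  interpret P: prob_space M by fact
  interpret PS: product_sigma_finite "\<lambda>_. M" by standard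
  interpret PK: prob_space "hist M K" by (rule prob_space_PiM) (rule P)
  let ?\<rho> = "RN_deriv M \<nu>"
  have sets: "sets \<nu> = sets M" and ac: "absolutely_continuous M \<nu>"
    and ae: "AE x in M. ?\<rho> x \<le> ennreal (1/\<sigma>)" using sm unfolding sigma_smooth_def by auto
  have S: "(\<integral>\<^sup>+x. g x \<partial>\<nu>) = (\<integral>\<^sup>+x. ?\<rho> x * g x \<partial>M)"
    using P.RN_deriv_nn_integral[OF ac sets] by simp
  have R1: "(\<integral>\<^sup>+x. ?\<rho> x \<partial>M) = 1"
    using P.RN_deriv_nn_integral[OF ac sets, of "\<lambda>_. 1"] prob_space.emeasure_space_1[OF Pn]
    by simp
  have mxm[measurable]: "mx g K \<in> borel_measurable (hist M K)" by (rule mx_meas1) auto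
  have split: "(\<integral>\<^sup>+v. mx g (Suc K) v \<partial>hist M (Suc K)) = (\<integral>\<^sup>+w. \<integral>\<^sup>+y. max (g y) (mx g K w) \<partial>M \<partial>hist M K)"
  proof -
    have e: "{0..<Suc K} = insert K {0..<K}" by auto
    have "(\<integral>\<^sup>+v. mx g (Suc K) v \<partial>hist M (Suc K)) = (\<integral>\<^sup>+w. \<integral>\<^sup>+y. mx g (Suc K) (w(K:=y)) \<partial>M \<partial>hist M K)"
      using PS.product_nn_integral_insert[of "{0..<K}" K "mx g (Suc K)"] mx_meas1[OF g, of "Suc K" "Suc K"]
      unfolding e by (simp del: mx.simps)
    also have "\<dots> = (\<integral>\<^sup>+w. \<integral>\<^sup>+y. max (g y) (mx g K w) \<partial>M \<partial>hist M K)"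
      by (simp add: mx_upd)
    finally show ?thesis .
  qed
  have "ennreal \<sigma> * (\<integral>\<^sup>+x. g x \<partial>\<nu>) + (\<integral>\<^sup>+v. mx g K v \<partial>hist M K)
      = (\<integral>\<^sup>+w. ennreal \<sigma> * (\<integral>\<^sup>+x. g x \<partial>\<nu>) + mx g K w \<partial>hist M K)"
    by (simp add: nn_integral_add PK.emeasure_space_1)
  also have "\<dots> = (\<integral>\<^sup>+w. \<integral>\<^sup>+y. ennreal \<sigma> * ?\<rho> y * g y + mx g K w \<partial>M \<partial>hist M K)"
  proof (rule nn_integral_cong)
    fix w
    have "(\<integral>\<^sup>+y. ennreal \<sigma> * ?\<rho> y * g y + mx g K w \<partial>M)
       = (\<integral>\<^sup>+y. ennreal \<sigma> * (?\<rho> y * g y) \<partial>M) + mx g K w"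
      by (simp add: nn_integral_add P.emeasure_space_1 mult.assoc)
    also have "\<dots> = ennreal \<sigma> * (\<integral>\<^sup>+x. g x \<partial>\<nu>) + mx g K w"
      by (simp add: nn_integral_cmult S)
    finally show "ennreal \<sigma> * (\<integral>\<^sup>+x. g x \<partial>\<nu>) + mx g K w = (\<integral>\<^sup>+y. ennreal \<sigma> * ?\<rho> y * g y + mx g K w \<partial>M)"
      by simp
  qed
  also have "\<dots> \<le> (\<integral>\<^sup>+w. \<integral>\<^sup>+y. max (g y) (mx g K w) + (ennreal \<sigma> * ?\<rho> y) * mx g K w \<partial>M \<partial>hist M K)"
  proof (rule nn_integral_mono, rule nn_integral_mono_AE)
    fix w
    show "AE y in M. ennreal \<sigma> * ?\<rho> y * g y + mx g K w \<le> max (g y) (mx g K w) + (ennreal \<sigma> * ?\<rho> y) * mx g K w"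
      using ae
    proof eventually_elim
      case (elim y)
      have "ennreal \<sigma> * ?\<rho> y \<le> ennreal \<sigma> * ennreal (1/\<sigma>)" by (rule mult_left_mono[OF elim]) simp
      also have "\<dots> = 1" using s by (simp add: ennreal_mult[symmetric])
      finally have s1: "ennreal \<sigma> * ?\<rho> y \<le> 1" .
      have "g y < \<top>" using g1[of y] by (simp add: le_less_trans[OF _ ennreal_one_less_top])
      moreover have "mx g K w < \<top>" using mx_le1[of g K w] g1 by (simp add: le_less_trans[OF _ ennreal_one_less_top])
      ultimately show ?case using pw_ineq[OF s1] by blast
    qed
  qed
  also have "\<dots> = (\<integral>\<^sup>+w. (\<integral>\<^sup>+y. max (g y) (mx g K w) \<partial>M) + ennreal \<sigma> * mx g K w \<partial>hist M K)"
  proof (rule nn_integral_cong)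
    fix w
    have "(\<integral>\<^sup>+y. max (g y) (mx g K w) + (ennreal \<sigma> * ?\<rho> y) * mx g K w \<partial>M)
      = (\<integral>\<^sup>+y. max (g y) (mx g K w) \<partial>M) + (\<integral>\<^sup>+y. (ennreal \<sigma> * mx g K w) * ?\<rho> y \<partial>M)"
      by (subst nn_integral_add) (auto simp: mult_ac)
    also have "\<dots> = (\<integral>\<^sup>+y. max (g y) (mx g K w) \<partial>M) + ennreal \<sigma> * mx g K w"
      by (simp add: nn_integral_cmult R1)
    finally show "(\<integral>\<^sup>+y. max (g y) (mx g K w) + (ennreal \<sigma> * ?\<rho> y) * mx g K w \<partial>M)
       = (\<integral>\<^sup>+y. max (g y) (mx g K w) \<partial>M) + ennreal \<sigma> * mx g K w" .
  qed
  also have "\<dots> = (\<integral>\<^sup>+v. mx g (Suc K) v \<partial>hist M (Suc K)) + ennreal \<sigma> * (\<integral>\<^sup>+v. mx g K v \<partial>hist M K)"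
    unfolding split by (subst nn_integral_add) (auto simp: nn_integral_cmult)
  finally show ?thesis .
qed


lemma key_lemma:
  assumes P: "prob_space M" and s: "0 < \<sigma>" "\<sigma> \<le> 1" and sm: "sigma_smooth M \<sigma> \<nu>"
    and Pn: "prob_space \<nu>"
    and g[measurable]: "g \<in> borel_measurable M" and g1: "\<And>x. g x \<le> 1"
  shows "(\<integral>\<^sup>+x. g x \<partial>\<nu>) \<le> (\<integral>\<^sup>+v. mx g K v \<partial>hist M K) + ennreal ((1 - \<sigma>) ^ K)"
proof -
  interpret P: prob_space M by fact
  interpret N: prob_space \<nu> by fact
  define S where "S = (\<integral>\<^sup>+x. g x \<partial>\<nu>)"
  define a where "a k = (\<integral>\<^sup>+v. mx g k v \<partial>hist M k)" for k
  have S1: "S \<le> 1" unfolding S_def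
    using nn_integral_mono[of \<nu> g "\<lambda>_. 1"] g1 N.emeasure_space_1 by simp
  have a1: "a k \<le> 1" for k
  proof -
    interpret PK: prob_space "hist M k" by (rule prob_space_PiM) (rule P)
    show ?thesis unfolding a_def
      using nn_integral_mono[of "hist M k" "mx g k" "\<lambda>_. 1"] mx_le1[of g k] g1 PK.emeasure_space_1 by simp
  qed
  have Sfin: "S < \<top>" using S1 by (simp add: le_less_trans[OF _ ennreal_one_less_top])
  have afin: "a k < \<top>" for k using a1[of k] by (simp add: le_less_trans[OF _ ennreal_one_less_top])
  have ind: "enn2real S \<le> enn2real (a k) + (1 - \<sigma>) ^ k * enn2real S" for k
  proof (induction k)
    case 0 then show ?case by (simp add: a_def enn2real_nonneg)
  next
    case (Suc k)
    have st: "ennreal \<sigma> * S + a k \<le> a (Suc k) + ennreal \<sigma> * a k"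
      unfolding S_def a_def by (rule key_step[OF P s sm Pn g g1])
    have "enn2real (ennreal \<sigma> * S + a k) \<le> enn2real (a (Suc k) + ennreal \<sigma> * a k)"
      by (rule enn2real_mono[OF st]) (simp add: afin ennreal_mult_less_top)
    then have r: "\<sigma> * enn2real S + enn2real (a k) \<le> enn2real (a (Suc k)) + \<sigma> * enn2real (a k)"
      using s Sfin afin by (simp add: enn2real_plus enn2real_mult ennreal_mult_less_top)
    have "(1 - \<sigma>) * enn2real S \<le> (1 - \<sigma>) * (enn2real (a k) + (1 - \<sigma>) ^ k * enn2real S)"
      by (rule mult_left_mono[OF Suc.IH]) (use s in simp)
    then have "(1 - \<sigma>) * enn2real S \<le> enn2real (a k) - \<sigma> * enn2real (a k) + (1 - \<sigma>) ^ Suc k * enn2real S"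
      by (simp add: algebra_simps)
    moreover have "enn2real S = \<sigma> * enn2real S + (1 - \<sigma>) * enn2real S" by (simp add: algebra_simps)
    ultimately show ?case using r by linarith
  qed
  have "S = ennreal (enn2real S)" using Sfin by simp
  also have "\<dots> \<le> ennreal (enn2real (a K) + (1 - \<sigma>) ^ K * enn2real S)"
    by (rule ennreal_leI[OF ind])
  also have "\<dots> \<le> ennreal (enn2real (a K) + (1 - \<sigma>) ^ K)"
  proof (rule ennreal_leI)
    have "enn2real S \<le> 1" using S1 Sfin by (simp add: enn2real_leI)
    then have "(1 - \<sigma>) ^ K * enn2real S \<le> (1 - \<sigma>) ^ K"
      using s by (simp add: mult_left_le)
    then show "enn2real (a K) + (1 - \<sigma>) ^ K * enn2real S \<le> enn2real (a K) + (1 - \<sigma>) ^ K" by simp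
  qed
  also have "\<dots> = a K + ennreal ((1 - \<sigma>) ^ K)"
  proof -
    have "ennreal (enn2real (a K)) = a K" using afin[of K] by simp
    moreover have "0 \<le> (1 - \<sigma>) ^ K" using s by simp
    ultimately show ?thesis by (subst ennreal_plus) (auto simp: enn2real_nonneg)
  qed
  finally show ?thesis unfolding S_def a_def .
qed



lemma numeric:
  fixes \<sigma> \<beta> :: real and K T :: nat
  assumes "0 < \<sigma>" "\<sigma> \<le> 1" "0 < \<beta>" "real K \<ge> ln (real T / \<beta>) / \<sigma>"
  shows "real T * (1 - \<sigma>) ^ K \<le> \<beta>"
proof (cases "T = 0")
  case True then show ?thesis using assms by simp
next
  case False
  have "(1 - \<sigma>) ^ K \<le> exp (- \<sigma>) ^ K"
    using assms by (intro power_mono) (auto simp: exp_ge_add_one_self[of "-\<sigma>", simplified] )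
  also have "\<dots> = exp (- (\<sigma> * K))" by (simp add: exp_of_nat_mult[symmetric] mult.commute)
  also have "\<dots> \<le> exp (- ln (real T / \<beta>))"
  proof -
    have "ln (real T / \<beta>) \<le> \<sigma> * K" using assms by (simp add: divide_le_eq mult.commute)
    then show ?thesis by simp
  qed
  also have "\<dots> = \<beta> / real T" using False assms by (simp add: exp_minus)
  finally show ?thesis using False by (simp add: field_simps)
qed


lemma kern_meas:
  assumes "\<kappa> \<in> hist M t \<rightarrow>\<^sub>M prob_algebra M"
  shows "(\<lambda>h. distr (\<kappa> h) (hist M (Suc t)) (\<lambda>x. h(t := x))) \<in> hist M t \<rightarrow>\<^sub>M prob_algebra (hist M (Suc t))"
  by (rule measurable_distr_prob_space2[OF assms upd_meas])

lemma proc_in: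
  assumes P: "prob_space M" and kp: "kernel_process M T \<kappa>"
  shows "t \<le> T \<Longrightarrow> proc_law M \<kappa> t \<in> space (prob_algebra (hist M t))"
proof (induction t)
  case 0 then show ?case using prob_space_PiM[of "{}" "\<lambda>_. M"] P by (simp add: space_prob_algebra)
next
  case (Suc t)
  have k: "\<kappa> t \<in> hist M t \<rightarrow>\<^sub>M prob_algebra M" using kp Suc.prems unfolding kernel_process_def by auto
  have A: "proc_law M \<kappa> t \<in> space (prob_algebra (hist M t))" using Suc by simp
  show ?case using prob_space_bind'[OF A kern_meas[OF k]] sets_bind'[OF A kern_meas[OF k]]
    by (simp add: space_prob_algebra)
qed

lemma proc_step:
  assumes P: "prob_space M" and kp: "kernel_process M T \<kappa>" and t: "t < T"
    and f: "f \<in> borel_measurable (hist M (Suc t))"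
  shows "(\<integral>\<^sup>+y. f y \<partial>proc_law M \<kappa> (Suc t)) = (\<integral>\<^sup>+h. \<integral>\<^sup>+x. f (h(t := x)) \<partial>\<kappa> t h \<partial>proc_law M \<kappa> t)"
proof -
  have k: "\<kappa> t \<in> hist M t \<rightarrow>\<^sub>M prob_algebra M" using kp t unfolding kernel_process_def by auto
  have A: "proc_law M \<kappa> t \<in> space (prob_algebra (hist M t))" using proc_in[OF P kp] t by simp
  then have sA: "sets (proc_law M \<kappa> t) = sets (hist M t)" by (simp add: space_prob_algebra)
  have N: "(\<lambda>h. distr (\<kappa> t h) (hist M (Suc t)) (\<lambda>x. h(t := x))) \<in> proc_law M \<kappa> t \<rightarrow>\<^sub>M subprob_algebra (hist M (Suc t))"
    using measurable_prob_algebraD[OF kern_meas[OF k]] by (simp add: measurable_cong_sets[OF sA refl])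
  have "(\<integral>\<^sup>+y. f y \<partial>proc_law M \<kappa> (Suc t)) = (\<integral>\<^sup>+h. \<integral>\<^sup>+y. f y \<partial>distr (\<kappa> t h) (hist M (Suc t)) (\<lambda>x. h(t := x)) \<partial>proc_law M \<kappa> t)"
    by (simp add: nn_integral_bind[OF f N])
  also have "\<dots> = (\<integral>\<^sup>+h. \<integral>\<^sup>+x. f (h(t := x)) \<partial>\<kappa> t h \<partial>proc_law M \<kappa> t)"
  proof (rule nn_integral_cong)
    fix h assume "h \<in> space (proc_law M \<kappa> t)"
    then have h: "h \<in> space (hist M t)" using sets_eq_imp_space_eq[OF sA] by simp
    have sk: "sets (\<kappa> t h) = sets M" using measurable_space[OF k h] by (simp add: space_prob_algebra)
    have "(\<lambda>x. h(t := x)) \<in> measurable M (hist M (Suc t))"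
      using measurable_Pair2[OF upd_meas h] by simp
    then have u: "(\<lambda>x. h(t := x)) \<in> measurable (\<kappa> t h) (hist M (Suc t))"
      by (simp add: measurable_cong_sets[OF sk refl])
    show "(\<integral>\<^sup>+y. f y \<partial>distr (\<kappa> t h) (hist M (Suc t)) (\<lambda>x. h(t := x))) = (\<integral>\<^sup>+x. f (h(t := x)) \<partial>\<kappa> t h)"
      using f by (subst nn_integral_distr[OF u]) auto
  qed
  finally show ?thesis .
qed

fun Wf :: "'a measure \<Rightarrow> nat \<Rightarrow> nat \<Rightarrow> (nat \<Rightarrow> 'a) set \<Rightarrow> nat \<Rightarrow> (nat \<Rightarrow> 'a) \<Rightarrow> ennreal" where
  "Wf M K T B 0 h = indicator B h"
| "Wf M K T B (Suc n) h = (\<integral>\<^sup>+v. mx (\<lambda>x. Wf M K T B n (h(T - Suc n := x))) K v \<partial>hist M K)"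

lemma Wf_le1:
  assumes P: "prob_space M"
  shows "Wf M K T B n h \<le> 1"
proof (induction n arbitrary: h)
  case 0 then show ?case by (simp add: indicator_def)
next
  case (Suc n)
  interpret PK: prob_space "hist M K" by (rule prob_space_PiM) (rule P)
  show ?case
    using nn_integral_mono[of "hist M K" "mx (\<lambda>x. Wf M K T B n (h(T - Suc n := x))) K" "\<lambda>_. 1"]
      mx_le1[of "\<lambda>x. Wf M K T B n (h(T - Suc n := x))" K] Suc PK.emeasure_space_1 by simp
qed

lemma Wf_meas:
  assumes P: "prob_space M" and B: "B \<in> sets (hist M T)"
  shows "n \<le> T \<Longrightarrow> Wf M K T B n \<in> borel_measurable (hist M (T - n))"
proof (induction n)
  case 0 then show ?case using B by simp
next
  case (Suc n)
  interpret PK: prob_space "hist M K" by (rule prob_space_PiM) (rule P)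
  define t where "t = T - Suc n"
  have tn: "T - n = Suc t" using Suc.prems unfolding t_def by simp
  have IH: "Wf M K T B n \<in> borel_measurable (hist M (Suc t))" using Suc tn by simp
  have G: "(\<lambda>(h, x). Wf M K T B n (h(t := x))) \<in> borel_measurable (hist M t \<Otimes>\<^sub>M M)"
    using measurable_comp[OF upd_meas IH] by (simp add: comp_def split_beta)
  have "(\<lambda>(h, v). mx (\<lambda>x. Wf M K T B n (h(t := x))) K v) \<in> borel_measurable (hist M t \<Otimes>\<^sub>M hist M K)"
    using mx_meas[of "\<lambda>h x. Wf M K T B n (h(t := x))", OF G, of K K] by simp
  then have "(\<lambda>h. \<integral>\<^sup>+v. mx (\<lambda>x. Wf M K T B n (h(t := x))) K v \<partial>hist M K) \<in> borel_measurable (hist M t)"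
    by (rule PK.borel_measurable_nn_integral)
  then show ?case unfolding t_def by simp
qed



theorem lemma16:
  fixes \<mu> :: "'a measure" and \<sigma> \<beta> :: real and K T :: nat and A :: "(nat \<Rightarrow> 'a) set"
  assumes "prob_space \<mu>"
    and "0 < \<sigma>" and "\<sigma> \<le> 1" and "0 < \<beta>"
    and "0 < K" and "real K \<ge> ln (real T / \<beta>) / \<sigma>"
    and "A \<in> sets (hist \<mu> T)"
    and "\<forall>\<kappa>. adversary_selection_process \<mu> K T \<kappa> \<longrightarrow> measure (proc_law \<mu> \<kappa> T) A \<ge> 1 - \<beta>"
  shows "\<forall>\<kappa>. smooth_process \<mu> \<sigma> T \<kappa> \<longrightarrow> measure (proc_law \<mu> \<kappa> T) A \<ge> 1 - 2 * \<beta>"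
proof (intro allI impI)
  fix \<kappa> assume sp: "smooth_process \<mu> \<sigma> T \<kappa>"
  note P = assms(1)
  note Kpos = assms(5)
  interpret P: prob_space \<mu> by fact
  define B where "B = space (hist \<mu> T) - A"
  have Bs: "B \<in> sets (hist \<mu> T)" using assms(7) by (auto simp: B_def)
  define W where "W t = Wf \<mu> K T B (T - t)" for t
  have Wm: "W t \<in> borel_measurable (hist \<mu> t)" if "t \<le> T" for t
    using Wf_meas[OF P Bs, of "T - t" K] that by (simp add: W_def)
  have W1: "W t h \<le> 1" for t h unfolding W_def by (rule Wf_le1[OF P])
  define G where "G t h x = W (Suc t) (h(t := x))" for t h x
  have Gm: "(\<lambda>(h, x). G t h x) \<in> borel_measurable (hist \<mu> t \<Otimes>\<^sub>M \<mu>)" if "t < T" for t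
    using measurable_comp[OF upd_meas Wm[of "Suc t"]] that by (simp add: comp_def split_beta G_def)
  have Gm1: "G t h \<in> borel_measurable \<mu>" if "t < T" "h \<in> space (hist \<mu> t)" for t h
    using measurable_Pair2[OF Gm[OF that(1)] that(2)] by simp
  have G1: "G t h x \<le> 1" for t h x unfolding G_def by (rule W1)
  have Wrec: "W t h = (\<integral>\<^sup>+v. mx (G t h) K v \<partial>hist \<mu> K)" if "t < T" for t h
  proof -
    have e: "T - t = Suc (T - Suc t)" "T - Suc (T - Suc t) = t" using that by auto
    show ?thesis unfolding W_def G_def by (simp only: e Wf.simps)
  qed
  define \<kappa>a where "\<kappa>a t h = distr (hist \<mu> K) \<mu> (\<lambda>v. v (ix (G t h) K v))" for t h
  have PKin: "hist \<mu> K \<in> space (prob_algebra (hist \<mu> K))"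
    using prob_space_PiM[of "{0..<K}" "\<lambda>_. \<mu>"] P by (simp add: space_prob_algebra)
  have kpa: "kernel_process \<mu> T \<kappa>a" unfolding kernel_process_def
  proof (intro allI impI)
    fix t assume t: "t < T"
    show "\<kappa>a t \<in> hist \<mu> t \<rightarrow>\<^sub>M prob_algebra \<mu>" unfolding \<kappa>a_def
      by (rule measurable_distr_prob_space2[OF measurable_const[OF PKin] sel_meas[OF Gm[OF t] Kpos]])
  qed
  have adv: "adversary_selection_process \<mu> K T \<kappa>a"
    unfolding adversary_selection_process_def
  proof (intro conjI kpa allI impI ballI)
    fix t h assume t: "t < T" and h: "h \<in> space (hist \<mu> t)"
    have m: "(\<lambda>v. v (ix (G t h) K v)) \<in> hist \<mu> K \<rightarrow>\<^sub>M \<mu>"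
      using measurable_Pair2[OF sel_meas[OF Gm[OF t] Kpos] h] by simp
    have "\<forall>v\<in>space (hist \<mu> K). v (ix (G t h) K v) \<in> v ` {0..<K}"
      using ix_less[OF Kpos] by (auto intro!: imageI)
    then show "K_selection_law \<mu> K (\<kappa>a t h)" unfolding K_selection_law_def \<kappa>a_def
      using m by blast
  qed
  have kps: "kernel_process \<mu> T \<kappa>" using sp by (simp add: smooth_process_def)
  define \<epsilon> where "\<epsilon> = (1 - \<sigma>) ^ K"
  have sp_h: "h \<in> space (hist \<mu> t)" if "h \<in> space (proc_law \<mu> k t)" "t \<le> T" "kernel_process \<mu> T k" for h t k
  proof -
    have "sets (proc_law \<mu> k t) = sets (hist \<mu> t)" using proc_in[OF P that(3) that(2)] by (simp add: space_prob_algebra)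
    then show ?thesis using sets_eq_imp_space_eq that(1) by metis
  qed
  have astep: "(\<integral>\<^sup>+y. W (Suc t) y \<partial>proc_law \<mu> \<kappa>a (Suc t)) = (\<integral>\<^sup>+y. W t y \<partial>proc_law \<mu> \<kappa>a t)" if t: "t < T" for t
  proof -
    have "(\<integral>\<^sup>+y. W (Suc t) y \<partial>proc_law \<mu> \<kappa>a (Suc t)) = (\<integral>\<^sup>+h. \<integral>\<^sup>+x. W (Suc t) (h(t := x)) \<partial>\<kappa>a t h \<partial>proc_law \<mu> \<kappa>a t)"
      using proc_step[OF P kpa t Wm[of "Suc t"]] t by simp
    also have "\<dots> = (\<integral>\<^sup>+y. W t y \<partial>proc_law \<mu> \<kappa>a t)"
    proof (rule nn_integral_cong)
      fix h assume "h \<in> space (proc_law \<mu> \<kappa>a t)"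
      then have h: "h \<in> space (hist \<mu> t)" using sp_h[OF _ _ kpa] t by simp
      have m: "(\<lambda>v. v (ix (G t h) K v)) \<in> hist \<mu> K \<rightarrow>\<^sub>M \<mu>"
        using measurable_Pair2[OF sel_meas[OF Gm[OF t] Kpos] h] by simp
      have "(\<integral>\<^sup>+x. W (Suc t) (h(t := x)) \<partial>\<kappa>a t h) = (\<integral>\<^sup>+x. G t h x \<partial>\<kappa>a t h)" by (simp add: G_def)
      also have "\<dots> = (\<integral>\<^sup>+v. G t h (v (ix (G t h) K v)) \<partial>hist \<mu> K)"
        unfolding \<kappa>a_def using Gm1[OF t h] by (subst nn_integral_distr[OF m]) auto
      also have "\<dots> = (\<integral>\<^sup>+v. mx (G t h) K v \<partial>hist \<mu> K)" by (simp add: ix_mx[OF Kpos])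
      also have "\<dots> = W t h" using Wrec[OF t] by simp
      finally show "(\<integral>\<^sup>+x. W (Suc t) (h(t := x)) \<partial>\<kappa>a t h) = W t h" .
    qed
    finally show ?thesis .
  qed
  have sstep: "(\<integral>\<^sup>+y. W (Suc t) y \<partial>proc_law \<mu> \<kappa> (Suc t)) \<le> (\<integral>\<^sup>+y. W t y \<partial>proc_law \<mu> \<kappa> t) + ennreal \<epsilon>" if t: "t < T" for t
  proof -
    interpret Pt: prob_space "proc_law \<mu> \<kappa> t"
      using proc_in[OF P kps, of t] t by (simp add: space_prob_algebra)
    have "(\<integral>\<^sup>+y. W (Suc t) y \<partial>proc_law \<mu> \<kappa> (Suc t)) = (\<integral>\<^sup>+h. \<integral>\<^sup>+x. W (Suc t) (h(t := x)) \<partial>\<kappa> t h \<partial>proc_law \<mu> \<kappa> t)"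
      using proc_step[OF P kps t Wm[of "Suc t"]] t by simp
    also have "\<dots> \<le> (\<integral>\<^sup>+h. W t h + ennreal \<epsilon> \<partial>proc_law \<mu> \<kappa> t)"
    proof (rule nn_integral_mono)
      fix h assume "h \<in> space (proc_law \<mu> \<kappa> t)"
      then have h: "h \<in> space (hist \<mu> t)" using sp_h[OF _ _ kps] t by simp
      have sm: "sigma_smooth \<mu> \<sigma> (\<kappa> t h)" using sp t h by (simp add: smooth_process_def)
      have "\<kappa> t \<in> hist \<mu> t \<rightarrow>\<^sub>M prob_algebra \<mu>"
        using kps t unfolding kernel_process_def by blast
      from measurable_space[OF this h] have "\<kappa> t h \<in> space (prob_algebra \<mu>)" .
      then have pk: "prob_space (\<kappa> t h)" by (simp add: space_prob_algebra)
      have "(\<integral>\<^sup>+x. W (Suc t) (h(t := x)) \<partial>\<kappa> t h) = (\<integral>\<^sup>+x. G t h x \<partial>\<kappa> t h)" by (simp add: G_def)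
      also have "\<dots> \<le> (\<integral>\<^sup>+v. mx (G t h) K v \<partial>hist \<mu> K) + ennreal \<epsilon>"
        unfolding \<epsilon>_def by (rule key_lemma[OF P assms(2,3) sm pk Gm1[OF t h] G1])
      also have "\<dots> = W t h + ennreal \<epsilon>" using Wrec[OF t] by simp
      finally show "(\<integral>\<^sup>+x. W (Suc t) (h(t := x)) \<partial>\<kappa> t h) \<le> W t h + ennreal \<epsilon>" .
    qed
    also have "\<dots> = (\<integral>\<^sup>+y. W t y \<partial>proc_law \<mu> \<kappa> t) + ennreal \<epsilon>"
    proof -
      have sA: "sets (proc_law \<mu> \<kappa> t) = sets (hist \<mu> t)"
        using proc_in[OF P kps, of t] t by (simp add: space_prob_algebra)
      have "W t \<in> borel_measurable (proc_law \<mu> \<kappa> t)"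
        using Wm[of t] t by (simp add: measurable_cong_sets[OF sA refl])
      then have "(\<integral>\<^sup>+h. W t h + ennreal \<epsilon> \<partial>proc_law \<mu> \<kappa> t) = (\<integral>\<^sup>+y. W t y \<partial>proc_law \<mu> \<kappa> t) + (\<integral>\<^sup>+h. ennreal \<epsilon> \<partial>proc_law \<mu> \<kappa> t)"
        by (rule nn_integral_add) simp
      also have "(\<integral>\<^sup>+h. ennreal \<epsilon> \<partial>proc_law \<mu> \<kappa> t) = ennreal \<epsilon>"
        by (simp add: Pt.emeasure_space_1)
      finally show ?thesis .
    qed
    finally show ?thesis .
  qed
  have achain: "t \<le> T \<Longrightarrow> (\<integral>\<^sup>+y. W t y \<partial>proc_law \<mu> \<kappa>a t) = (\<integral>\<^sup>+y. W 0 y \<partial>proc_law \<mu> \<kappa>a 0)" for t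
    by (induction t) (auto simp: astep simp del: proc_law.simps)
  have schain: "t \<le> T \<Longrightarrow> (\<integral>\<^sup>+y. W t y \<partial>proc_law \<mu> \<kappa> t) \<le> (\<integral>\<^sup>+y. W 0 y \<partial>proc_law \<mu> \<kappa> 0) + of_nat t * ennreal \<epsilon>" for t
  proof (induction t)
    case (Suc t)
    then have "(\<integral>\<^sup>+y. W (Suc t) y \<partial>proc_law \<mu> \<kappa> (Suc t)) \<le> (\<integral>\<^sup>+y. W t y \<partial>proc_law \<mu> \<kappa> t) + ennreal \<epsilon>"
      by (intro sstep) simp
    also have "\<dots> \<le> (\<integral>\<^sup>+y. W 0 y \<partial>proc_law \<mu> \<kappa> 0) + of_nat t * ennreal \<epsilon> + ennreal \<epsilon>"
      using Suc by (intro add_right_mono) simp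
    finally show ?case by (simp add: algebra_simps)
  qed simp
  define Pa where "Pa = proc_law \<mu> \<kappa>a T"
  define Ps where "Ps = proc_law \<mu> \<kappa> T"
  have Pain: "Pa \<in> space (prob_algebra (hist \<mu> T))" unfolding Pa_def using proc_in[OF P kpa] by simp
  have Psin: "Ps \<in> space (prob_algebra (hist \<mu> T))" unfolding Ps_def using proc_in[OF P kps] by simp
  interpret Pa: prob_space Pa using Pain by (simp add: space_prob_algebra)
  interpret Ps: prob_space Ps using Psin by (simp add: space_prob_algebra)
  have sPa: "sets Pa = sets (hist \<mu> T)" using Pain by (simp add: space_prob_algebra)
  have sPs: "sets Ps = sets (hist \<mu> T)" using Psin by (simp add: space_prob_algebra)
  have BPa: "B = space Pa - A" unfolding B_def using sets_eq_imp_space_eq[OF sPa] by simp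
  have BPs: "B = space Ps - A" unfolding B_def using sets_eq_imp_space_eq[OF sPs] by simp
  have APa: "A \<in> Pa.events" using sPa assms(7) by simp
  have APs: "A \<in> Ps.events" using sPs assms(7) by simp
  have mPa: "measure Pa B = 1 - measure Pa A" unfolding BPa by (rule Pa.prob_compl[OF APa])
  have mPs: "measure Ps B = 1 - measure Ps A" unfolding BPs by (rule Ps.prob_compl[OF APs])
  have ha: "measure Pa A \<ge> 1 - \<beta>" using assms(8) adv unfolding Pa_def by blast
  have WT: "W T = indicator B" by (rule ext) (simp add: W_def)
  have intPa: "(\<integral>\<^sup>+y. W T y \<partial>Pa) = emeasure Pa B"
    unfolding WT using Bs sPa by simp
  have intPs: "(\<integral>\<^sup>+y. W T y \<partial>Ps) = emeasure Ps B"
    unfolding WT using Bs sPs by simp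
  have p0: "proc_law \<mu> \<kappa>a 0 = proc_law \<mu> \<kappa> 0" by simp
  have "(\<integral>\<^sup>+y. W T y \<partial>Ps) \<le> (\<integral>\<^sup>+y. W T y \<partial>Pa) + of_nat T * ennreal \<epsilon>"
    using schain[of T] achain[of T] unfolding Pa_def Ps_def by simp
  then have "emeasure Ps B \<le> emeasure Pa B + of_nat T * ennreal \<epsilon>"
    unfolding intPa intPs .
  then have "ennreal (measure Ps B) \<le> ennreal (measure Pa B + real T * \<epsilon>)"
    using assms(2,3) by (simp add: Ps.emeasure_eq_measure Pa.emeasure_eq_measure \<epsilon>_def
        ennreal_of_nat_eq_real_of_nat ennreal_mult[symmetric] ennreal_plus[symmetric] del: ennreal_plus)
  then have "measure Ps B \<le> measure Pa B + real T * \<epsilon>"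
    using assms(2,3) by (subst (asm) ennreal_le_iff) (auto simp: \<epsilon>_def)
  moreover have "real T * \<epsilon> \<le> \<beta>" unfolding \<epsilon>_def by (rule numeric[OF assms(2,3,4,6)])
  ultimately show "measure (proc_law \<mu> \<kappa> T) A \<ge> 1 - 2 * \<beta>"
    using mPa mPs ha unfolding Ps_def[symmetric] by linarith
qed


end
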